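(* Let $S=\{\alpha_i^l: i\in[\![d]\!],\ 1\le l\le k-1\}$. For any coloring $\Gamma$ and $k$-ordering $\Omega$ of $T_{d,k}$ with root $\mathcal T$, the map $g\mapsto g.\mathcal T$ is a graph isomorphism from the Cayley graph $\mathrm{Cay}(G_{d,k};S)$ (vertex set $G_{d,k}$, edges $\{g,sg\}$, $s\in S$) onto the line graph of $T_{d,k}$.
   Context: Fix $d,k\ge1$, $[\![d]\!]=\{0,\dots,d\}$. $G_{d,k}=\langle\alpha_0,\dots,\alpha_d\mid\alpha_i^k=e\rangle$ is the free product of $d+1$ cyclic groups of order $k$. The arboreal complex $T_{d,k}$: start from a single $d$-simplex $\mathcal T$, attach to each of its $(d-1)$-faces $k-1$ new $d$-simplices each using a new vertex, and inductively attach to each $(d-1)$-face created in the previous step $k-1$ new $d$-simplices each using a new vertex; $T_{d,k}$ is the union. The line graph of $T_{d,k}$ has the $d$-cells as vertices, two distinct $d$-cells adjacent iff they share a $(d-1)$-cell. A coloring $\Gamma$ is a map from vertices to $[\![d]\!]$ injective on each $d$-cell, extended to cells by $\Gamma(\sigma)=\{\Gamma(v):v\in\sigma\}$. A $k$-ordering $\Omega$ assigns to each $(d-1)$-cell $\sigma$ a homomorphism $\Omega_\sigma:\mathbb Z/k\mathbb Z\to\mathrm{Sym}(\delta(\sigma))$ with transitive image, $\delta(\sigma)$ the set of $d$-cells containing $\sigma$. Left action on $d$-cells: $\alpha_i^l.\tau=\Omega_\sigma(l).\tau$ where $\sigma$ is the $(d-1)$-face of $\tau$ of color $[\![d]\!]\setminus\{i\}$,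 extended to words letter by letter (right-most first); this is a well-defined action of $G_{d,k}$. *)

theory Defs
  imports "HOL-Library.FSet" "HOL-Algebra.Elementary_Groups" "HOL-Algebra.Bij"
begin

text \<open>Vertices: the d+1 vertices of the root simplex, and new vertices.  The new vertex
  New s j is the j-th new vertex (1 <= j <= k-1) attached to the (d-1)-face s.\<close>
datatype vtx = Root nat | New "vtx fset" nat

definition root_simplex :: "nat \<Rightarrow> vtx fset" where
  "root_simplex d = Root |`| fset_of_list [0..<Suc d]"

text \<open>Faces to which new simplices get attached: the (d-1)-faces of the root simplex, and
  inductively the (d-1)-faces created in the previous step, i.e. the (d-1)-faces of a newly
  attached simplex containing its new vertex.\<close>
inductive ext_face :: "nat \<Rightarrow> nat \<Rightarrow> vtx fset \<Rightarrow> bool" for d k where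
  ext_root: "u |\<in>| root_simplex d \<Longrightarrow> ext_face d k (root_simplex d |-| {|u|})"
| ext_step: "ext_face d k s \<Longrightarrow> 1 \<le> j \<Longrightarrow> j \<le> k - 1 \<Longrightarrow> u |\<in>| s \<Longrightarrow>
      ext_face d k (finsert (New s j) (s |-| {|u|}))"

inductive dcell :: "nat \<Rightarrow> nat \<Rightarrow> vtx fset \<Rightarrow> bool" for d k where
  cell_root: "dcell d k (root_simplex d)"
| cell_new: "ext_face d k s \<Longrightarrow> 1 \<le> j \<Longrightarrow> j \<le> k - 1 \<Longrightarrow> dcell d k (finsert (New s j) s)"

definition vertices :: "nat \<Rightarrow> nat \<Rightarrow> vtx set" where
  "vertices d k = {v. \<exists>t. dcell d k t \<and> v |\<in>| t}"

definition dm1cell :: "nat \<Rightarrow> nat \<Rightarrow> vtx fset \<Rightarrow> bool" where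
  "dm1cell d k s \<longleftrightarrow> (\<exists>t. dcell d k t \<and> s |\<subseteq>| t \<and> fcard s = d)"

definition delta :: "nat \<Rightarrow> nat \<Rightarrow> vtx fset \<Rightarrow> vtx fset set" where
  "delta d k s = {t. dcell d k t \<and> s |\<subseteq>| t}"

definition line_adj :: "nat \<Rightarrow> nat \<Rightarrow> vtx fset \<Rightarrow> vtx fset \<Rightarrow> bool" where
  "line_adj d k t t' \<longleftrightarrow> dcell d k t \<and> dcell d k t' \<and> t \<noteq> t' \<and>
     (\<exists>s. dm1cell d k s \<and> s |\<subseteq>| t \<and> s |\<subseteq>| t')"

definition coloring :: "nat \<Rightarrow> nat \<Rightarrow> (vtx \<Rightarrow> nat) \<Rightarrow> bool" where
  "coloring d k \<Gamma> \<longleftrightarrow> (\<forall>v \<in> vertices d k. \<Gamma> v \<le> d) \<and>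
     (\<forall>t. dcell d k t \<longrightarrow> inj_on \<Gamma> (fset t))"

definition k_ordering :: "nat \<Rightarrow> nat \<Rightarrow> (vtx fset \<Rightarrow> int \<Rightarrow> vtx fset \<Rightarrow> vtx fset) \<Rightarrow> bool" where
  "k_ordering d k \<Omega> \<longleftrightarrow> (\<forall>s. dm1cell d k s \<longrightarrow>
     \<Omega> s \<in> hom (integer_mod_group k) (BijGroup (delta d k s)) \<and>
     (\<forall>t \<in> delta d k s. \<forall>t' \<in> delta d k s. \<exists>l \<in> carrier (integer_mod_group k). \<Omega> s l t = t'))"

text \<open>Elements of the free product G_{d,k} of d+1 cyclic groups of order k, represented by
  their reduced words: a list [(i1,l1),...,(in,ln)] stands for
  alpha_{i1}^{l1} ... alpha_{in}^{ln}, with i <= d, 1 <= l <= k-1, consecutive i distinct.\<close>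
definition Gdk :: "nat \<Rightarrow> nat \<Rightarrow> (nat \<times> nat) list set" where
  "Gdk d k = {w. (\<forall>(i,l) \<in> set w. i \<le> d \<and> 1 \<le> l \<and> l \<le> k - 1) \<and>
                  successively (\<lambda>a b. fst a \<noteq> fst b) w}"

text \<open>Left multiplication of a reduced word by the generator power alpha_i^l.\<close>
fun gmult :: "nat \<Rightarrow> nat \<times> nat \<Rightarrow> (nat \<times> nat) list \<Rightarrow> (nat \<times> nat) list" where
  "gmult k (i,l) [] = (if l mod k = 0 then [] else [(i, l mod k)])"
| "gmult k (i,l) ((j,m) # w) =
     (if i = j then (if (l + m) mod k = 0 then w else (i, (l + m) mod k) # w)
      else if l mod k = 0 then (j,m) # w else (i, l mod k) # (j,m) # w)"

definition gens :: "nat \<Rightarrow> nat \<Rightarrow> (nat \<times> nat) set" where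
  "gens d k = {(i,l). i \<le> d \<and> 1 \<le> l \<and> l \<le> k - 1}"

definition cay_adj :: "nat \<Rightarrow> nat \<Rightarrow> (nat \<times> nat) list \<Rightarrow> (nat \<times> nat) list \<Rightarrow> bool" where
  "cay_adj d k g h \<longleftrightarrow> g \<in> Gdk d k \<and> h \<in> Gdk d k \<and> (\<exists>s \<in> gens d k. h = gmult k s g)"

definition face_col :: "(vtx \<Rightarrow> nat) \<Rightarrow> vtx fset \<Rightarrow> nat \<Rightarrow> vtx fset" where
  "face_col \<Gamma> t i = ffilter (\<lambda>v. \<Gamma> v \<noteq> i) t"

definition gen_act :: "(vtx \<Rightarrow> nat) \<Rightarrow> (vtx fset \<Rightarrow> int \<Rightarrow> vtx fset \<Rightarrow> vtx fset) \<Rightarrow>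
    nat \<times> nat \<Rightarrow> vtx fset \<Rightarrow> vtx fset" where
  "gen_act \<Gamma> \<Omega> a t = \<Omega> (face_col \<Gamma> t (fst a)) (int (snd a)) t"

text \<open>Action of a word, letter by letter, right-most letter first.\<close>
definition word_act :: "(vtx \<Rightarrow> nat) \<Rightarrow> (vtx fset \<Rightarrow> int \<Rightarrow> vtx fset \<Rightarrow> vtx fset) \<Rightarrow>
    (nat \<times> nat) list \<Rightarrow> vtx fset \<Rightarrow> vtx fset" where
  "word_act \<Gamma> \<Omega> w t = foldr (gen_act \<Gamma> \<Omega>) w t"

end

theory Submission imports Defs begin
lemma size_mem: "v |\<in>| s \<Longrightarrow> size v < size (New s j)"
proof -
  assume "v |\<in>| s"
  hence "Suc (size v) \<le> (\<Sum>x\<in>fset s. Suc (size x))"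
    by (intro member_le_sum) auto
  thus ?thesis by simp
qed

lemma New_notin: "New s j |\<notin>| s"
  using size_mem by blast

lemma no_cycle: "New a ja |\<in>| b \<Longrightarrow> New b jb |\<in>| a \<Longrightarrow> False"
  using size_mem by (metis less_asym)

lemma top_unique: "finsert (New a ja) a = finsert (New b jb) b \<Longrightarrow> a = b \<and> ja = jb"
  by (metis finsertE New_notin no_cycle finsertI1 vtx.inject)

lemma root_mem: "v |\<in>| root_simplex d \<longleftrightarrow> (\<exists>n\<le>d. v = Root n)"
  unfolding root_simplex_def by (auto simp: fset_of_list.rep_eq)

lemma root_noNew: "New s j |\<notin>| root_simplex d"
  by (simp add: root_mem)

lemma fcard_root: "fcard (root_simplex d) = Suc d"
proof -
  have "fset (root_simplex d) = Root ` {0..<Suc d}"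
    unfolding root_simplex_def by (auto simp: fset_of_list.rep_eq)
  moreover have "inj_on Root {0..<Suc d}" by (auto simp: inj_on_def)
  ultimately show ?thesis by (simp add: fcard.rep_eq card_image)
qed

lemma ext_face_card: "ext_face d k s \<Longrightarrow> fcard s = d"
proof (induction rule: ext_face.induct)
  case (ext_root u)
  then show ?case using fcard_root[of d]
    by (simp add: fcard.rep_eq card_Diff_singleton)
next
  case (ext_step s j u)
  have "New s j |\<notin>| s |-| {|u|}" using New_notin by auto
  hence "fcard (finsert (New s j) (s |-| {|u|})) = Suc (fcard (s |-| {|u|}))"
    by (simp add: fcard_finsert_disjoint)
  moreover have "fcard (s |-| {|u|}) = fcard s - 1" using ext_step
    by (simp add: fcard.rep_eq card_Diff_singleton)
  moreover have "fcard s \<ge> 1" using ext_step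
    by (auto simp: fcard.rep_eq Suc_le_eq card_gt_0_iff)
  ultimately show ?case using ext_step by simp
qed

lemma dcell_card: "dcell d k t \<Longrightarrow> fcard t = Suc d"
proof (induction rule: dcell.induct)
  case cell_root
  then show ?case by (rule fcard_root)
next
  case (cell_new s j)
  then show ?case using ext_face_card[OF cell_new(1)] New_notin
    by (simp add: fcard_finsert_disjoint)
qed

lemma ext_face_cases: "ext_face d k s \<Longrightarrow> (\<exists>u. u |\<in>| root_simplex d \<and> s = root_simplex d |-| {|u|}) \<or>
  (\<exists>s0 j0 u. s = finsert (New s0 j0) (s0 |-| {|u|}) \<and> ext_face d k s0 \<and> 1\<le>j0 \<and> j0 \<le> k-1 \<and> u |\<in>| s0)"
  by (induction rule: ext_face.induct) blast+

lemma parent_ex: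
  assumes "ext_face d k s"
  shows "\<exists>P. \<forall>a. dcell d k a \<and> s |\<subseteq>| a \<longrightarrow> a = P \<or> (\<exists>j. 1\<le>j \<and> j\<le>k-1 \<and> a = finsert (New s j) s)"
  using ext_face_cases[OF assms]
proof
  assume "\<exists>u. u |\<in>| root_simplex d \<and> s = root_simplex d |-| {|u|}"
  then obtain u where u: "u |\<in>| root_simplex d" "s = root_simplex d |-| {|u|}" by blast
  show ?thesis
  proof (rule exI[of _ "root_simplex d"], intro allI impI)
    fix a assume a: "dcell d k a \<and> s |\<subseteq>| a"
    hence "dcell d k a" by blast
    then show "a = root_simplex d \<or> (\<exists>j. 1\<le>j \<and> j\<le>k-1 \<and> a = finsert (New s j) s)"
    proof cases
      case cell_root then show ?thesis by simp
    next
      case (cell_new s' j')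
      have "New s' j' |\<notin>| s" using u root_noNew by auto
      hence "s |\<subseteq>| s'" using a cell_new by auto
      moreover have "fcard s = fcard s'" using ext_face_card assms cell_new by metis
      ultimately have "s = s'" by (metis fcard_seteq order_refl)
      then show ?thesis using cell_new by blast
    qed
  qed
next
  assume "\<exists>s0 j0 u. s = finsert (New s0 j0) (s0 |-| {|u|}) \<and> ext_face d k s0 \<and> 1\<le>j0 \<and> j0 \<le> k-1 \<and> u |\<in>| s0"
  then obtain s0 j0 u where u: "s = finsert (New s0 j0) (s0 |-| {|u|})" "ext_face d k s0" by blast
  show ?thesis
  proof (rule exI[of _ "finsert (New s0 j0) s0"], intro allI impI)
    fix a assume a: "dcell d k a \<and> s |\<subseteq>| a"
    hence "dcell d k a" by blast
    then show "a = finsert (New s0 j0) s0 \<or> (\<exists>j. 1\<le>j \<and> j\<le>k-1 \<and> a = finsert (New s j) s)"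
    proof cases
      case cell_root then show ?thesis using a u root_noNew by auto
    next
      case (cell_new s' j')
      show ?thesis
      proof (cases "s = s'")
        case True then show ?thesis using cell_new by blast
      next
        case False
        have "fcard s = fcard s'" using ext_face_card assms cell_new by metis
        hence "\<not> s |\<subseteq>| s'" using False by (metis fcard_seteq order_refl)
        hence ns: "New s' j' |\<in>| s" using a cell_new by auto
        have n0: "New s0 j0 |\<in>| a" using a u by auto
        show ?thesis
        proof (cases "New s0 j0 = New s' j'")
          case True then show ?thesis using cell_new by auto
        next
          case F: False
          hence "New s0 j0 |\<in>| s'" using n0 cell_new by auto
          moreover have "New s' j' |\<in>| s0" using ns F u by auto
          ultimately show ?thesis using no_cycle by blast
        qed
      qed
    qed
  qed
qed

lemma dcell_vertices: "dcell d k t \<Longrightarrow> v |\<in>| t \<Longrightarrow> v \<in> vertices d k"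
  unfolding vertices_def by blast

locale L =
  fixes d k :: nat and \<Gamma> :: "vtx \<Rightarrow> nat" and \<Omega> :: "vtx fset \<Rightarrow> int \<Rightarrow> vtx fset \<Rightarrow> vtx fset"
  assumes d1: "d \<ge> 1" and k1: "k \<ge> 1" and col: "coloring d k \<Gamma>" and ord: "k_ordering d k \<Omega>"
begin

abbreviation F where "F t i \<equiv> face_col \<Gamma> t i"

lemma F_mem: "v |\<in>| F t i \<longleftrightarrow> v |\<in>| t \<and> \<Gamma> v \<noteq> i"
  unfolding face_col_def by auto

lemma F_sub: "F t i |\<subseteq>| t"
  using F_mem by auto

lemma colors_cell: assumes "dcell d k t" shows "\<Gamma> ` fset t = {0..d}"
proof -
  have inj: "inj_on \<Gamma> (fset t)" using col assms unfolding coloring_def by blast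
  have sub: "\<Gamma> ` fset t \<subseteq> {0..d}" using col assms dcell_vertices unfolding coloring_def by fastforce
  have "card (\<Gamma> ` fset t) = Suc d" using card_image[OF inj] dcell_card[OF assms] by (simp add: fcard.rep_eq)
  thus ?thesis using sub by (simp add: card_subset_eq)
qed

lemma color_inj: "dcell d k t \<Longrightarrow> u |\<in>| t \<Longrightarrow> v |\<in>| t \<Longrightarrow> \<Gamma> u = \<Gamma> v \<Longrightarrow> u = v"
  using col unfolding coloring_def inj_on_def by blast

lemma color_ex: "dcell d k t \<Longrightarrow> i \<le> d \<Longrightarrow> \<exists>u. u |\<in>| t \<and> \<Gamma> u = i"
  using colors_cell by (metis atLeastAtMost_iff imageE zero_le)

lemma F_minus: "dcell d k t \<Longrightarrow> u |\<in>| t \<Longrightarrow> F t (\<Gamma> u) = t |-| {|u|}"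
  using color_inj F_mem by fastforce

lemma F_card: assumes "dcell d k t" "i \<le> d" shows "fcard (F t i) = d"
proof -
  obtain u where u: "u |\<in>| t" "\<Gamma> u = i" using color_ex assms by blast
  hence "F t i = t |-| {|u|}" using F_minus assms by blast
  thus ?thesis using u dcell_card[OF assms(1)] by (simp add: fcard.rep_eq card_Diff_singleton)
qed

lemma F_of_sub: assumes "dcell d k t" "s |\<subseteq>| t" "fcard s = d"
  shows "\<exists>i\<le>d. s = F t i"
proof -
  have "fcard s < fcard t" using assms dcell_card by simp
  hence "\<not> t |\<subseteq>| s" using fcard_mono by (metis leD)
  then obtain u where u: "u |\<in>| t" "u |\<notin>| s" by blast
  have "\<Gamma> u \<le> d" using colors_cell[OF assms(1)] u by auto
  have "s |\<subseteq>| F t (\<Gamma> u)" using F_minus[OF assms(1) u(1)] u assms(2) by auto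
  moreover have "fcard (F t (\<Gamma> u)) \<le> fcard s" using F_card assms \<open>\<Gamma> u \<le> d\<close> by simp
  ultimately show ?thesis using \<open>\<Gamma> u \<le> d\<close> by (metis fcard_seteq)
qed

lemma F_eq: assumes "dcell d k t" "s |\<subseteq>| t" "fcard s = d" "i \<le> d" "\<forall>v. v |\<in>| s \<longrightarrow> \<Gamma> v \<noteq> i"
  shows "s = F t i"
proof -
  have "s |\<subseteq>| F t i" using assms F_mem by auto
  moreover have "fcard (F t i) \<le> fcard s" using F_card assms by simp
  ultimately show ?thesis by (metis fcard_seteq)
qed

lemma F_root: assumes "i \<le> d" shows "ext_face d k (F (root_simplex d) i)"
proof -
  obtain u where u: "u |\<in>| root_simplex d" "\<Gamma> u = i" using color_ex assms cell_root by blast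
  thus ?thesis using F_minus[OF cell_root u(1)] ext_root[OF u(1)] by simp
qed

lemma F_step: assumes "dcell d k t" "t = finsert (New s0 j0) s0" "ext_face d k s0" "1 \<le> j0" "j0 \<le> k-1"
   "\<Gamma> (New s0 j0) \<noteq> i" "i \<le> d"
 shows "ext_face d k (F t i) \<and> \<not>(\<exists>j. t = finsert (New (F t i) j) (F t i))"
proof -
  obtain u where u: "u |\<in>| t" "\<Gamma> u = i" using color_ex assms by blast
  hence u0: "u |\<in>| s0" using assms by auto
  have FF: "F t i = finsert (New s0 j0) (s0 |-| {|u|})"
    using F_minus[OF assms(1) u(1)] u assms New_notin by auto
  have "ext_face d k (F t i)" using FF ext_step[OF assms(3-5) u0] by simp
  moreover have "\<not>(\<exists>j. t = finsert (New (F t i) j) (F t i))"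
  proof
    assume "\<exists>j. t = finsert (New (F t i) j) (F t i)"
    then obtain j where "finsert (New s0 j0) s0 = finsert (New (F t i) j) (F t i)" using assms by auto
    hence "s0 = F t i" using top_unique by blast
    thus False using FF New_notin by auto
  qed
  ultimately show ?thesis by blast
qed

lemma Reg: assumes "ext_face d k s" "dcell d k t" "s |\<subseteq>| t" "\<not>(\<exists>j. t = finsert (New s j) s)"
  shows "(\<lambda>m. \<Omega> s m t) ` {0..<int k} = delta d k s \<and> inj_on (\<lambda>m. \<Omega> s m t) {0..<int k} \<and> \<Omega> s 0 t = t"
proof -
  have dm: "dm1cell d k s" unfolding dm1cell_def using assms ext_face_card by blast
  have hom: "\<Omega> s \<in> hom (integer_mod_group k) (BijGroup (delta d k s))"
   and tr: "\<forall>t \<in> delta d k s. \<forall>t' \<in> delta d k s. \<exists>l \<in> carrier (integer_mod_group k). \<Omega> s l t = t'"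
    using ord dm unfolding k_ordering_def by blast+
  have car: "carrier (integer_mod_group k) = {0..<int k}" using k1 by (simp add: carrier_integer_mod_group)
  have td: "t \<in> delta d k s" using assms unfolding delta_def by blast
  have img: "(\<lambda>m. \<Omega> s m t) ` {0..<int k} = delta d k s"
  proof
    show "(\<lambda>m. \<Omega> s m t) ` {0..<int k} \<subseteq> delta d k s"
    proof
      fix x assume "x \<in> (\<lambda>m. \<Omega> s m t) ` {0..<int k}"
      then obtain m where m: "m \<in> {0..<int k}" "x = \<Omega> s m t" by blast
      have "\<Omega> s m \<in> Bij (delta d k s)" using hom m car unfolding hom_def BijGroup_def by auto
      thus "x \<in> delta d k s" using m td Bij_imp_funcset by blast
    qed
    show "delta d k s \<subseteq> (\<lambda>m. \<Omega> s m t) ` {0..<int k}"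
    proof
      fix x assume "x \<in> delta d k s"
      then obtain l where "l \<in> {0..<int k}" "\<Omega> s l t = x" using tr td car by blast
      thus "x \<in> (\<lambda>m. \<Omega> s m t) ` {0..<int k}" by blast
    qed
  qed
  have one: "\<Omega> s 0 = (\<lambda>x \<in> delta d k s. x)"
    using hom_one[OF hom group_integer_mod_group group_BijGroup] by (simp add: BijGroup_def)
  define ch where "ch = (\<lambda>j. finsert (New s j) s) ` {1..k-1}"
  have chd: "insert t ch \<subseteq> delta d k s"
    unfolding ch_def delta_def using td cell_new[OF assms(1)] unfolding delta_def by auto
  have "inj_on (\<lambda>j. finsert (New s j) s) {1..k-1}"
    by (auto simp: inj_on_def dest: top_unique)
  hence "card ch = k - 1" unfolding ch_def by (simp add: card_image)
  moreover have "t \<notin> ch" using assms(4) unfolding ch_def by blast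
  ultimately have cardc: "card (insert t ch) = k" using k1 unfolding ch_def by simp
  have fin: "finite (delta d k s)" using img[symmetric] by simp
  have "k \<le> card (delta d k s)" using card_mono[OF fin chd] cardc by simp
  moreover have "card (delta d k s) \<le> k" 
    using img card_image_le[of "{0..<int k}" "\<lambda>m. \<Omega> s m t"] by simp
  ultimately have "card ((\<lambda>m. \<Omega> s m t) ` {0..<int k}) = card {0..<int k}" using img by simp
  hence "inj_on (\<lambda>m. \<Omega> s m t) {0..<int k}" by (simp add: eq_card_imp_inj_on)
  thus ?thesis using img one td by simp
qed


abbreviation c where "c w \<equiv> word_act \<Gamma> \<Omega> w (root_simplex d)"

lemma c_Nil: "c [] = root_simplex d" by (simp add: word_act_def)
lemma c_Cons: "c ((i,l)#w) = \<Omega> (F (c w) i) (int l) (c w)" by (simp add: word_act_def gen_act_def)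

lemma Gdk_Cons: "(i,l)#w \<in> Gdk d k \<longleftrightarrow> i \<le> d \<and> 1 \<le> l \<and> l \<le> k-1 \<and> w \<in> Gdk d k \<and> (w = [] \<or> fst (hd w) \<noteq> i)"
  unfolding Gdk_def by (cases w) auto

lemma Nil_Gdk: "[] \<in> Gdk d k" unfolding Gdk_def by simp

definition good where "good w \<longleftrightarrow> dcell d k (c w) \<and>
  (\<forall>i. i \<le> d \<and> (w = [] \<or> fst (hd w) \<noteq> i) \<longrightarrow> ext_face d k (F (c w) i) \<and> \<not>(\<exists>j. c w = finsert (New (F (c w) i) j) (F (c w) i))) \<and>
  (\<forall>i l w'. w = (i,l)#w' \<longrightarrow> (\<exists>j. 1 \<le> j \<and> j \<le> k-1 \<and> c w = finsert (New (F (c w') i) j) (F (c w') i) \<and> \<Gamma> (New (F (c w') i) j) = i))"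

lemma inv: "w \<in> Gdk d k \<Longrightarrow> good w"
proof (induction w)
  case Nil
  have "\<not>(\<exists>j. root_simplex d = finsert (New (F (root_simplex d) i) j) (F (root_simplex d) i))" for i
    using root_noNew by (metis finsertI1)
  then show ?case unfolding good_def c_Nil using cell_root F_root by simp
next
  case (Cons a w)
  obtain i l where a: "a = (i,l)" by fastforce
  have G: "i \<le> d" "1 \<le> l" "l \<le> k-1" "w \<in> Gdk d k" "w = [] \<or> fst (hd w) \<noteq> i"
    using Cons.prems Gdk_Cons a by blast+
  have gw: "good w" using Cons.IH G by blast
  define s where "s = F (c w) i"
  define t where "t = c w"
  have gw2: "\<forall>i. i \<le> d \<and> (w = [] \<or> fst (hd w) \<noteq> i) \<longrightarrow> ext_face d k (F (c w) i) \<and> \<not>(\<exists>j. c w = finsert (New (F (c w) i) j) (F (c w) i))"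
    and dt: "dcell d k t" using gw unfolding good_def t_def by auto
  have hs: "ext_face d k s" and nch: "\<not>(\<exists>j. t = finsert (New s j) s)"
    using gw2[rule_format, of i] G unfolding s_def t_def by auto
  have R: "(\<lambda>m. \<Omega> s m t) ` {0..<int k} = delta d k s \<and> inj_on (\<lambda>m. \<Omega> s m t) {0..<int k} \<and> \<Omega> s 0 t = t"
    using Reg[OF hs dt _ nch] F_sub unfolding s_def t_def by blast
  define x where "x = \<Omega> s (int l) t"
  have cx: "c (a#w) = x" unfolding x_def a c_Cons s_def t_def by simp
  have lk: "int l \<in> {0..<int k}" using G k1 by auto
  have xd: "x \<in> delta d k s" using R lk unfolding x_def by blast
  have "x \<noteq> t"
  proof
    assume "x = t"
    hence "\<Omega> s (int l) t = \<Omega> s 0 t" using R unfolding x_def by simp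
    moreover have "(0::int) \<in> {0..<int k}" using k1 by simp
    ultimately have "int l = 0" using R lk inj_onD by metis
    thus False using G by simp
  qed
  obtain P where P: "\<forall>a. dcell d k a \<and> s |\<subseteq>| a \<longrightarrow> a = P \<or> (\<exists>j. 1\<le>j \<and> j\<le>k-1 \<and> a = finsert (New s j) s)"
    using parent_ex[OF hs] by blast
  have "t = P" using P[rule_format, of t] dt nch F_sub[of t i] unfolding s_def t_def by blast
  moreover have xs: "dcell d k x" "s |\<subseteq>| x" using xd unfolding delta_def by auto
  ultimately obtain j where j: "1\<le>j" "j\<le>k-1" "x = finsert (New s j) s" using P[rule_format, of x] \<open>x \<noteq> t\<close> by blast
  have colx: "\<Gamma> (New s j) = i"
  proof -
    obtain v where v: "v |\<in>| x" "\<Gamma> v = i" using color_ex[OF xs(1) G(1)] by blast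
    have "v |\<notin>| s" using v F_mem unfolding s_def by blast
    thus ?thesis using v j by auto
  qed
  have part2: "\<forall>i'. i' \<le> d \<and> (a#w = [] \<or> fst (hd (a#w)) \<noteq> i') \<longrightarrow> ext_face d k (F (c (a#w)) i') \<and> \<not>(\<exists>j. c (a#w) = finsert (New (F (c (a#w)) i') j) (F (c (a#w)) i'))"
  proof (intro allI impI)
    fix i' assume "i' \<le> d \<and> (a#w = [] \<or> fst (hd (a#w)) \<noteq> i')"
    hence i': "i' \<le> d" "i \<noteq> i'" using a by auto
    show "ext_face d k (F (c (a#w)) i') \<and> \<not>(\<exists>j. c (a#w) = finsert (New (F (c (a#w)) i') j) (F (c (a#w)) i'))"
      using F_step[OF xs(1) j(3) hs j(1) j(2) _ i'(1)] colx i' cx by simp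
  qed
  have part3: "\<forall>i2 l2 w'. a#w = (i2,l2)#w' \<longrightarrow> (\<exists>j. 1 \<le> j \<and> j \<le> k-1 \<and> c (a#w) = finsert (New (F (c w') i2) j) (F (c w') i2) \<and> \<Gamma> (New (F (c w') i2) j) = i2)"
    using j colx cx a unfolding s_def t_def by auto
  show ?case unfolding good_def using part2 part3 xs cx by simp
qed

lemma good_parts:
  assumes "w \<in> Gdk d k"
  shows "dcell d k (c w)"
    "i \<le> d \<Longrightarrow> (w = [] \<or> fst (hd w) \<noteq> i) \<Longrightarrow> ext_face d k (F (c w) i)"
    "i \<le> d \<Longrightarrow> (w = [] \<or> fst (hd w) \<noteq> i) \<Longrightarrow> \<not>(\<exists>j. c w = finsert (New (F (c w) i) j) (F (c w) i))"
    "w = (i,l)#w' \<Longrightarrow> \<exists>j. 1 \<le> j \<and> j \<le> k-1 \<and> c w = finsert (New (F (c w') i) j) (F (c w') i) \<and> \<Gamma> (New (F (c w') i) j) = i"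
  using inv[OF assms] unfolding good_def by blast+


lemma cell_reg: assumes "w \<in> Gdk d k" "i \<le> d" "w = [] \<or> fst (hd w) \<noteq> i"
  shows "(\<lambda>m. \<Omega> (F (c w) i) m (c w)) ` {0..<int k} = delta d k (F (c w) i) \<and>
    inj_on (\<lambda>m. \<Omega> (F (c w) i) m (c w)) {0..<int k} \<and> \<Omega> (F (c w) i) 0 (c w) = c w"
  using Reg[OF good_parts(2)[OF assms] good_parts(1)[OF assms(1)] F_sub good_parts(3)[OF assms]] .

lemma c_inj: "w \<in> Gdk d k \<Longrightarrow> v \<in> Gdk d k \<Longrightarrow> c w = c v \<Longrightarrow> w = v"
proof (induction w arbitrary: v)
  case Nil
  show ?case
  proof (cases v)
    case (Cons b v')
    obtain i l where "b = (i,l)" by fastforce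
    then obtain j where "c v = finsert (New (F (c v') i) j) (F (c v') i)"
      using good_parts(4)[OF Nil.prems(2)] Cons by blast
    thus ?thesis using Nil.prems(3) root_noNew c_Nil by (metis finsertI1)
  qed simp
next
  case (Cons a w)
  obtain i l where a: "a = (i,l)" by fastforce
  show ?case
  proof (cases v)
    case Nil
    obtain j where "c (a#w) = finsert (New (F (c w) i) j) (F (c w) i)"
      using good_parts(4)[OF Cons(2)] a by blast
    thus ?thesis using Cons(4) Nil root_noNew c_Nil by (metis finsertI1)
  next
    case (Cons b v')
    obtain i2 l2 where b: "b = (i2,l2)" by fastforce
    obtain j where j: "c (a#w) = finsert (New (F (c w) i) j) (F (c w) i)" "\<Gamma> (New (F (c w) i) j) = i"
      using good_parts(4)[OF Cons.prems(1)] a by blast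
    obtain j2 where j2: "c v = finsert (New (F (c v') i2) j2) (F (c v') i2)" "\<Gamma> (New (F (c v') i2) j2) = i2"
      using good_parts(4)[OF Cons.prems(2)] b Cons by blast
    have eq: "F (c w) i = F (c v') i2" "j = j2" using top_unique j j2 Cons.prems(3) by metis+
    hence ii: "i = i2" using j j2 by simp
    define s where "s = F (c w) i"
    have Gw: "i \<le> d" "1 \<le> l" "l \<le> k-1" "w \<in> Gdk d k" "w = [] \<or> fst (hd w) \<noteq> i"
      using Cons.prems(1) a Gdk_Cons by blast+
    have Gv: "i \<le> d" "1 \<le> l2" "l2 \<le> k-1" "v' \<in> Gdk d k" "v' = [] \<or> fst (hd v') \<noteq> i"
      using Cons.prems(2) Cons b ii Gdk_Cons by blast+
    have hs: "ext_face d k s" using good_parts(2)[OF Gw(4,1,5)] s_def by simp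
    obtain P where P: "\<forall>a. dcell d k a \<and> s |\<subseteq>| a \<longrightarrow> a = P \<or> (\<exists>j. 1\<le>j \<and> j\<le>k-1 \<and> a = finsert (New s j) s)"
      using parent_ex[OF hs] by blast
    have "c w = P" using P[rule_format, of "c w"] good_parts(1)[OF Gw(4)] good_parts(3)[OF Gw(4,1,5)] F_sub
      unfolding s_def by blast
    moreover have "c v' = P" using P[rule_format, of "c v'"] good_parts(1)[OF Gv(4)] good_parts(3)[OF Gv(4,1,5)] F_sub
      eq ii unfolding s_def by metis
    ultimately have cw: "c w = c v'" by simp
    hence wv: "w = v'" using Cons.IH Gw(4) Gv(4) by blast
    have R: "inj_on (\<lambda>m. \<Omega> (F (c w) i) m (c w)) {0..<int k}" using cell_reg[OF Gw(4,1,5)] by blast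
    have "\<Omega> (F (c w) i) (int l) (c w) = \<Omega> (F (c w) i) (int l2) (c w)"
      using Cons.prems(3) a b Cons ii wv c_Cons by simp
    moreover have "int l \<in> {0..<int k}" "int l2 \<in> {0..<int k}" using Gw Gv k1 by auto
    ultimately have "int l = int l2" using R inj_onD by metis
    thus ?thesis using a b Cons ii wv by simp
  qed
qed

lemma child_word: assumes "w \<in> Gdk d k" "i \<le> d" "w = [] \<or> fst (hd w) \<noteq> i" "1 \<le> j" "j \<le> k-1"
  shows "\<exists>m. (i,m)#w \<in> Gdk d k \<and> c ((i,m)#w) = finsert (New (F (c w) i) j) (F (c w) i)"
proof -
  define s where "s = F (c w) i"
  have hs: "ext_face d k s" using good_parts(2)[OF assms(1-3)] s_def by simp
  have R: "(\<lambda>m. \<Omega> s m (c w)) ` {0..<int k} = delta d k s" "\<Omega> s 0 (c w) = c w"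
    using cell_reg[OF assms(1-3)] s_def by auto
  have nch: "\<not>(\<exists>j. c w = finsert (New s j) s)" using good_parts(3)[OF assms(1-3)] s_def by simp
  define x where "x = finsert (New s j) s"
  have "x \<in> delta d k s" using cell_new[OF hs assms(4,5)] unfolding x_def delta_def by auto
  hence "x \<in> (\<lambda>m. \<Omega> s m (c w)) ` {0..<int k}" by (subst R(1))
  then obtain m where m: "m \<in> {0..<int k}" "\<Omega> s m (c w) = x" by (rule imageE) simp
  have "m \<noteq> 0"
  proof
    assume "m = 0"
    hence "\<Omega> s 0 (c w) = x" using m(2) by simp
    hence "c w = x" unfolding R(2) .
    thus False using nch x_def by blast
  qed
  hence "1 \<le> nat m" "nat m \<le> k - 1" using m by auto
  hence "(i, nat m)#w \<in> Gdk d k" unfolding Gdk_Cons using assms(1-3) by blast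
  moreover have "c ((i, nat m)#w) = x" using m c_Cons s_def by simp
  ultimately show ?thesis using x_def s_def by blast
qed

lemma face_word: "ext_face d k s \<Longrightarrow> \<exists>w\<in>Gdk d k. \<exists>i\<le>d. s = F (c w) i \<and> (w = [] \<or> fst (hd w) \<noteq> i)"
proof (induction rule: ext_face.induct)
  case (ext_root u)
  have "\<Gamma> u \<le> d" using colors_cell[OF cell_root] ext_root by auto
  thus ?case using F_minus[OF cell_root ext_root] Nil_Gdk c_Nil by (intro bexI[of _ "[]"]) auto
next
  case (ext_step s j u)
  obtain w i where w: "w \<in> Gdk d k" "i \<le> d" "s = F (c w) i" "w = [] \<or> fst (hd w) \<noteq> i"
    using ext_step.IH by blast
  obtain m where m: "(i,m)#w \<in> Gdk d k" "c ((i,m)#w) = finsert (New s j) s"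
    using child_word[OF w(1,2,4) ext_step(2,3)] w(3) by blast
  have dc: "dcell d k (c ((i,m)#w))" using good_parts(1)[OF m(1)] .
  have um: "u |\<in>| c ((i,m)#w)" using m ext_step by simp
  have "\<Gamma> u \<le> d" using colors_cell[OF dc] um by auto
  moreover have "\<Gamma> u \<noteq> i" using ext_step(4) w(3) F_mem by blast
  moreover have "F (c ((i,m)#w)) (\<Gamma> u) = finsert (New s j) (s |-| {|u|})"
    using F_minus[OF dc um] m New_notin ext_step(4) by auto
  ultimately show ?case using m(1) by (intro bexI[of _ "(i,m)#w"]) auto
qed

lemma c_surj: "dcell d k x \<Longrightarrow> \<exists>w\<in>Gdk d k. c w = x"
proof (induction rule: dcell.induct)
  case cell_root
  then show ?case using Nil_Gdk c_Nil by blast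
next
  case (cell_new s j)
  obtain w i where w: "w \<in> Gdk d k" "i \<le> d" "s = F (c w) i" "w = [] \<or> fst (hd w) \<noteq> i"
    using face_word[OF cell_new(1)] by blast
  show ?case using child_word[OF w(1,2,4) cell_new(2,3)] w(3) by blast
qed


lemma gmult_A: "1 \<le> l \<Longrightarrow> l \<le> k-1 \<Longrightarrow> (g = [] \<or> fst (hd g) \<noteq> i) \<Longrightarrow> gmult k (i,l) g = (i,l)#g"
  by (cases g) auto

lemma mod_ne: "1 \<le> (l::nat) \<Longrightarrow> l \<le> k-1 \<Longrightarrow> m \<le> k - 1 \<Longrightarrow> (l+m) mod k \<noteq> m"
proof
  assume a: "1 \<le> l" "l \<le> k-1" "m \<le> k - 1" "(l+m) mod k = m"
  show False
  proof (cases "l + m < k")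
    case True then show ?thesis using a by simp
  next
    case False
    hence "(l+m) mod k = (l+m-k) mod k" by (simp add: le_mod_geq)
    also have "\<dots> = l+m-k" using a False by simp
    finally show ?thesis using a False by simp
  qed
qed

lemma arith_r: assumes "1 \<le> (n::nat)" "n \<le> k-1" "1 \<le> m0" "m0 \<le> k-1" "n \<noteq> m0"
  shows "1 \<le> (n+k-m0) mod k \<and> (n+k-m0) mod k \<le> k-1 \<and> ((n+k-m0) mod k + m0) mod k = n"
proof (cases "n > m0")
  case True
  hence e: "(n+k-m0) mod k = n - m0" using assms by (simp add: le_mod_geq)
  have "1 \<le> n - m0" "n - m0 \<le> k-1" "n - m0 + m0 = n" "n < k" using True assms by arith+
  then show ?thesis using e by simp
next
  case False
  hence "n+k-m0 < k" using assms by simp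
  hence "(n+k-m0) mod k = n+k-m0" by simp
  moreover have "(n+k-m0 + m0) mod k = n" using assms False by (simp add: le_mod_geq)
  moreover have "1 \<le> n+k-m0" "n+k-m0 \<le> k-1" using assms False by arith+
  ultimately show ?thesis by simp
qed

lemma adj_fwd: assumes g: "g \<in> Gdk d k" and h: "h \<in> Gdk d k" and il: "(i,l) \<in> gens d k" and hg: "h = gmult k (i,l) g"
  shows "line_adj d k (c g) (c h)"
proof -
  have i: "i \<le> d" "1 \<le> l" "l \<le> k-1" using il unfolding gens_def by auto
  have "\<exists>s. dm1cell d k s \<and> s |\<subseteq>| c g \<and> s |\<subseteq>| c h \<and> h \<noteq> g"
  proof (cases "g = [] \<or> fst (hd g) \<noteq> i")
    case True
    hence h2: "h = (i,l)#g" using gmult_A i hg by simp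
    obtain j where "c h = finsert (New (F (c g) i) j) (F (c g) i)" using good_parts(4)[OF h h2] by blast
    moreover have "dm1cell d k (F (c g) i)" unfolding dm1cell_def
      using good_parts(1)[OF g] F_sub F_card[OF good_parts(1)[OF g] i(1)] by blast
    ultimately show ?thesis using F_sub h2 by auto
  next
    case False
    then obtain m g' where g2: "g = (i,m)#g'" by (cases g) auto
    have Gg: "i \<le> d" "1 \<le> m" "m \<le> k-1" "g' \<in> Gdk d k" "g' = [] \<or> fst (hd g') \<noteq> i"
      using g g2 Gdk_Cons by blast+
    define s where "s = F (c g') i"
    obtain j where "c g = finsert (New s j) s" using good_parts(4)[OF g g2] s_def by blast
    hence sg: "s |\<subseteq>| c g" by auto
    have dm: "dm1cell d k s" unfolding dm1cell_def s_def
      using good_parts(1)[OF Gg(4)] F_sub F_card[OF good_parts(1)[OF Gg(4)] i(1)] by blast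
    show ?thesis
    proof (cases "(l+m) mod k = 0")
      case True
      hence "h = g'" using hg g2 by simp
      thus ?thesis using dm sg F_sub g2 s_def by auto
    next
      case False
      hence h2: "h = (i, (l+m) mod k)#g'" using hg g2 by simp
      obtain j where "c h = finsert (New s j) s" using good_parts(4)[OF h h2] s_def by blast
      moreover have "(l+m) mod k \<noteq> m" using mod_ne i Gg by blast
      ultimately show ?thesis using dm sg h2 g2 by auto
    qed
  qed
  then obtain s where s: "dm1cell d k s" "s |\<subseteq>| c g" "s |\<subseteq>| c h" "h \<noteq> g" by blast
  have "c g \<noteq> c h" using c_inj g h s(4) by metis
  thus ?thesis unfolding line_adj_def using s good_parts(1)[OF g] good_parts(1)[OF h] by blast
qed

lemma adj_bwd: assumes g: "g \<in> Gdk d k" and h: "h \<in> Gdk d k" and adj: "line_adj d k (c g) (c h)"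
  shows "\<exists>a\<in>gens d k. h = gmult k a g"
proof -
  obtain s where s: "dm1cell d k s" "s |\<subseteq>| c g" "s |\<subseteq>| c h" and ne: "c g \<noteq> c h"
    using adj unfolding line_adj_def by blast
  have dg: "dcell d k (c g)" and dh: "dcell d k (c h)" using good_parts(1) g h by blast+
  have fs: "fcard s = d" using s(1) unfolding dm1cell_def by blast
  obtain i where i: "i \<le> d" "s = F (c g) i" using F_of_sub[OF dg s(2) fs] by blast
  have hd: "c h \<in> delta d k s" using dh s(3) unfolding delta_def by blast
  show ?thesis
  proof (cases "g = [] \<or> fst (hd g) \<noteq> i")
    case True
    have R: "(\<lambda>m. \<Omega> s m (c g)) ` {0..<int k} = delta d k s" "\<Omega> s 0 (c g) = c g"
      using cell_reg[OF g i(1) True] i(2) by auto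
    have "c h \<in> (\<lambda>m. \<Omega> s m (c g)) ` {0..<int k}" using hd by (subst R(1))
    then obtain m where m: "m \<in> {0..<int k}" "\<Omega> s m (c g) = c h" by (rule imageE) simp
    have "m \<noteq> 0"
    proof
      assume "m = 0"
      hence "\<Omega> s 0 (c g) = c h" using m(2) by simp
      hence "c g = c h" unfolding R(2) .
      thus False using ne by simp
    qed
    hence n: "1 \<le> nat m" "nat m \<le> k - 1" using m by auto
    hence g2: "(i, nat m)#g \<in> Gdk d k" unfolding Gdk_Cons using g i True by blast
    have "c ((i, nat m)#g) = c h" using m c_Cons i(2) by simp
    hence "h = (i, nat m)#g" using c_inj g2 h by metis
    hence "h = gmult k (i, nat m) g" using gmult_A[OF n True] by simp
    moreover have "(i, nat m) \<in> gens d k" using n i unfolding gens_def by simp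
    ultimately show ?thesis by blast
  next
    case False
    then obtain m0 g' where g2: "g = (i,m0)#g'" by (cases g) auto
    have Gg: "i \<le> d" "1 \<le> m0" "m0 \<le> k-1" "g' \<in> Gdk d k" "g' = [] \<or> fst (hd g') \<noteq> i"
      using g g2 Gdk_Cons by blast+
    define s' where "s' = F (c g') i"
    obtain j where "c g = finsert (New s' j) s'" using good_parts(4)[OF g g2] s'_def by blast
    hence sg: "s' |\<subseteq>| c g" by auto
    have "fcard s' = d" using F_card[OF good_parts(1)[OF Gg(4)] i(1)] s'_def by simp
    hence "s' = s" using F_eq[OF dg sg _ i(1)] F_mem s'_def i(2) by blast
    have R: "(\<lambda>m. \<Omega> s m (c g')) ` {0..<int k} = delta d k s" "\<Omega> s 0 (c g') = c g'"
      using cell_reg[OF Gg(4) i(1) Gg(5)] \<open>s' = s\<close> s'_def by auto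
    have "c h \<in> (\<lambda>m. \<Omega> s m (c g')) ` {0..<int k}" using hd by (subst R(1))
    then obtain m where m: "m \<in> {0..<int k}" "\<Omega> s m (c g') = c h" by (rule imageE) simp
    show ?thesis
    proof (cases "m = 0")
      case True
      hence "\<Omega> s 0 (c g') = c h" using m(2) by simp
      hence "c g' = c h" unfolding R(2) .
      hence hg': "h = g'" using c_inj Gg(4) h by metis
      have "(k - m0 + m0) mod k = 0" using Gg by simp
      hence "gmult k (i, k - m0) g = g'" using g2 by simp
      moreover have "(i, k - m0) \<in> gens d k" using Gg unfolding gens_def by auto
      ultimately show ?thesis using hg' by metis
    next
      case False
      hence n: "1 \<le> nat m" "nat m \<le> k - 1" using m by auto
      hence g3: "(i, nat m)#g' \<in> Gdk d k" unfolding Gdk_Cons using Gg by blast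
      have "c ((i, nat m)#g') = c h" using m c_Cons \<open>s' = s\<close> s'_def by simp
      hence hh: "h = (i, nat m)#g'" using c_inj g3 h by metis
      have "nat m \<noteq> m0" using hh g2 ne by auto
      define r where "r = (nat m + k - m0) mod k"
      have r: "1 \<le> r" "r \<le> k-1" "(r + m0) mod k = nat m"
        using arith_r[OF n Gg(2,3) \<open>nat m \<noteq> m0\<close>] r_def by auto
      have "gmult k (i, r) g = (i, nat m)#g'" using g2 r n by simp
      moreover have "(i, r) \<in> gens d k" using r i unfolding gens_def by simp
      ultimately show ?thesis using hh by metis
    qed
  qed
qed

end

theorem corollary5:
  fixes d k :: nat and \<Gamma> :: "vtx \<Rightarrow> nat"
    and \<Omega> :: "vtx fset \<Rightarrow> int \<Rightarrow> vtx fset \<Rightarrow> vtx fset"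
  assumes "d \<ge> 1" and "k \<ge> 1"
    and "coloring d k \<Gamma>" and "k_ordering d k \<Omega>"
  shows "bij_betw (\<lambda>g. word_act \<Gamma> \<Omega> g (root_simplex d)) (Gdk d k) {t. dcell d k t}
       \<and> (\<forall>g \<in> Gdk d k. \<forall>h \<in> Gdk d k. cay_adj d k g h \<longleftrightarrow>
            line_adj d k (word_act \<Gamma> \<Omega> g (root_simplex d)) (word_act \<Gamma> \<Omega> h (root_simplex d)))"
proof -
  interpret L d k \<Gamma> \<Omega> using assms by unfold_locales
  have "inj_on (\<lambda>g. word_act \<Gamma> \<Omega> g (root_simplex d)) (Gdk d k)"
    using c_inj by (intro inj_onI) blast
  moreover have "(\<lambda>g. word_act \<Gamma> \<Omega> g (root_simplex d)) ` Gdk d k = {t. dcell d k t}"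
  proof
    show "(\<lambda>g. word_act \<Gamma> \<Omega> g (root_simplex d)) ` Gdk d k \<subseteq> {t. dcell d k t}"
      using good_parts(1) by blast
    show "{t. dcell d k t} \<subseteq> (\<lambda>g. word_act \<Gamma> \<Omega> g (root_simplex d)) ` Gdk d k"
    proof
      fix t assume "t \<in> {t. dcell d k t}"
      then obtain w where "w \<in> Gdk d k" "c w = t" using c_surj by blast
      thus "t \<in> (\<lambda>g. word_act \<Gamma> \<Omega> g (root_simplex d)) ` Gdk d k" by blast
    qed
  qed
  moreover have "\<forall>g \<in> Gdk d k. \<forall>h \<in> Gdk d k. cay_adj d k g h \<longleftrightarrow> line_adj d k (c g) (c h)"
  proof (intro ballI iffI)
    fix g h assume gh: "g \<in> Gdk d k" "h \<in> Gdk d k"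
    { assume "cay_adj d k g h"
      then obtain a where a: "a \<in> gens d k" "h = gmult k a g" unfolding cay_adj_def by blast
      obtain i l where "a = (i,l)" by fastforce
      thus "line_adj d k (c g) (c h)" using adj_fwd[OF gh] a by blast }
    { assume "line_adj d k (c g) (c h)"
      thus "cay_adj d k g h" using adj_bwd[OF gh] gh unfolding cay_adj_def by blast }
  qed
  ultimately show ?thesis unfolding bij_betw_def by blast
qed
end
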